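(* Let $n$ be a prime and let $g<n$ be a positive integer which is a generator of $U(\mathbb Z/n\mathbb Z)$. Let $A=g\text{-}circ(a_1,\dots,a_n)$, let $\Phi(A)=(a_1,a_2,\dots,a_n)^T$ be its first row and $\Upsilon(A)=(A_{11},A_{22},\dots,A_{nn})^T$ the vector of its diagonal entries. Then $$\Upsilon(A)=Q_{n-g+1}\,\Phi(A).$$
   Context: $g\text{-}circ(a_1,\dots,a_n)$ is the $n\times n$ matrix whose $(i,j)$ entry is $a_{j-(i-1)g}$ (subscripts taken modulo $n$ in $\{1,\dots,n\}$), i.e. each row is the preceding row cyclically shifted $g$ places to the right. For an integer $h$, $Q_h$ is the $n\times n$ permutation matrix whose $(i,j)$ entry is $1$ if $j\equiv 1+(i-1)h\pmod n$ and $0$ otherwise. *)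

theory Defs
  imports "HOL-Number_Theory.Number_Theory"
begin

(* n x n matrices are functions nat => nat => 'a, indices in {1..n};
   vectors are functions nat => 'a, indices in {1..n}. *)

definition sub_mod :: "nat \<Rightarrow> int \<Rightarrow> nat" where
  "sub_mod n k = nat ((k - 1) mod int n) + 1"

definition gcirc :: "nat \<Rightarrow> nat \<Rightarrow> (nat \<Rightarrow> 'a) \<Rightarrow> nat \<Rightarrow> nat \<Rightarrow> 'a" where
  "gcirc n g a i j = a (sub_mod n (int j - (int i - 1) * int g))"

definition Qperm :: "nat \<Rightarrow> int \<Rightarrow> nat \<Rightarrow> nat \<Rightarrow> 'a::zero_neq_one" where
  "Qperm n h i j = (if [int j = 1 + (int i - 1) * h] (mod int n) then 1 else 0)"

definition mat_vec :: "nat \<Rightarrow> (nat \<Rightarrow> nat \<Rightarrow> 'a::semiring_1) \<Rightarrow> (nat \<Rightarrow> 'a) \<Rightarrow> nat \<Rightarrow> 'a" where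
  "mat_vec n M v i = (\<Sum>j = 1..n. M i j * v j)"

definition Phi :: "(nat \<Rightarrow> nat \<Rightarrow> 'a) \<Rightarrow> nat \<Rightarrow> 'a" where
  "Phi M = (\<lambda>j. M 1 j)"

definition Upsilon :: "(nat \<Rightarrow> nat \<Rightarrow> 'a) \<Rightarrow> nat \<Rightarrow> 'a" where
  "Upsilon M = (\<lambda>i. M i i)"

end

theory Submission
  imports Defs
begin

lemma sub_mod_range: "n > 0 \<Longrightarrow> sub_mod n k \<in> {1..n}"
proof -
  assume n: "n > 0"
  have "0 \<le> (k - 1) mod int n" "(k - 1) mod int n < int n" using n by auto
  thus ?thesis unfolding sub_mod_def by auto
qed

lemma sub_mod_cong: "n > 0 \<Longrightarrow> [int (sub_mod n k) = k] (mod int n)"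
  unfolding sub_mod_def cong_def
  by (simp add: mod_simps)

lemma sub_mod_id: "j \<in> {1..n} \<Longrightarrow> sub_mod n (int j) = j"
  unfolding sub_mod_def by auto

lemma uniq: assumes "j \<in> {1..n}" "j' \<in> {1..n}" "[int j = int j'] (mod int n)"
  shows "j = j'"
proof -
  have "int j mod int n = int j' mod int n" using assms(3) by (simp add: cong_def)
  hence "(int j - 1) mod int n = (int j' - 1) mod int n"
    by (metis mod_diff_left_eq)
  moreover have "(int j - 1) mod int n = int j - 1" "(int j' - 1) mod int n = int j' - 1"
    using assms(1,2) by auto
  ultimately show ?thesis by simp
qed

theorem mainTheorem8:
  fixes n g :: nat and a :: "nat \<Rightarrow> 'a::comm_ring_1"
  assumes "prime n" and "0 < g" and "g < n" and "ord n g = n - 1"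
  shows "\<forall>i\<in>{1..n}. Upsilon (gcirc n g a) i
           = mat_vec n (Qperm n (int n - int g + 1)) (Phi (gcirc n g a)) i"
proof
  fix i assume i: "i \<in> {1..n}"
  have n0: "n > 0" using assms(2,3) by simp
  define k where "k = int i - (int i - 1) * int g"
  define j0 where "j0 = sub_mod n k"
  have j0r: "j0 \<in> {1..n}" unfolding j0_def using sub_mod_range[OF n0] .
  have ck: "[1 + (int i - 1) * (int n - int g + 1) = k] (mod int n)"
  proof -
    have "1 + (int i - 1) * (int n - int g + 1) = k + (int i - 1) * int n"
      unfolding k_def by (simp add: algebra_simps)
    thus ?thesis by (simp add: cong_def)
  qed
  have iff: "[int j = 1 + (int i - 1) * (int n - int g + 1)] (mod int n) \<longleftrightarrow> j = j0"
    if j: "j \<in> {1..n}" for j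
  proof
    assume "[int j = 1 + (int i - 1) * (int n - int g + 1)] (mod int n)"
    hence "[int j = int j0] (mod int n)" using ck sub_mod_cong[OF n0, of k] unfolding j0_def
      by (meson cong_sym cong_trans)
    thus "j = j0" using uniq j j0r by blast
  next
    assume "j = j0"
    thus "[int j = 1 + (int i - 1) * (int n - int g + 1)] (mod int n)"
      using ck sub_mod_cong[OF n0, of k] unfolding j0_def
      by (meson cong_sym cong_trans)
  qed
  have "mat_vec n (Qperm n (int n - int g + 1)) (Phi (gcirc n g a)) i
      = (\<Sum>j = 1..n. (if j = j0 then a j else 0))"
    unfolding mat_vec_def Qperm_def Phi_def gcirc_def
    by (rule sum.cong) (auto simp: iff sub_mod_id)
  also have "\<dots> = a j0" using j0r by simp
  finally show "Upsilon (gcirc n g a) i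
           = mat_vec n (Qperm n (int n - int g + 1)) (Phi (gcirc n g a)) i"
    unfolding Upsilon_def gcirc_def j0_def k_def by simp
qed

end
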